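(* Let $n\ge 3$ and let $m,a,b,c$ be integers with $m\ge 0$, $a\ge1$, $b\ge 1$, $c\ge 1$ and $a+b+c=n$. Put $$W=(s_{a+b}s_{a+b-1}\cdots s_2)\,(s_1s_2\cdots s_n)\,(s_{n-1}s_{n-2}\cdots s_{a+b+1}).$$ Then $$(m^a,(m+1)^b,m^c)=(s_{a+1}s_{a+2}\cdots s_{a+b-1})\,W^m(\alpha_{a+b}).$$ In particular $(m^a,(m+1)^b,m^c)$ is a positive real root.
   Context: Notation: $(x^a,y^b,z^c)$ denotes the vector in $\mathbb{Z}^n$ whose first $a$ entries equal $x$, next $b$ entries equal $y$ and last $c$ entries equal $z$. The simple roots $\alpha_1,\dots,\alpha_n$ are the standard basis vectors of $\mathbb{Z}^n$. For $1\le i\le n$ the simple reflection $s_i:\mathbb{Z}^n\to\mathbb{Z}^n$ is the linear map which changes only the $i$-th coordinate of $v=(v^1,\dots,v^n)$, replacing $v^i$ by $v^{i-1}+v^{i+1}-v^i$, with indices modulo $n$ in $\{1,\dots,n\}$. Products are compositions of maps (the rightmost factor acts first). Convention: an ascending product $s_js_{j+1}\cdots s_l$ with $l<j$ and a descending product $s_ls_{l-1}\cdots s_j$ with $l<j$ are both the identity map. A real root is a vector $s_{i_1}\cdots s_{i_j}(\alpha_k)$; it is positive if its entries are nonnegative. *)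

theory Defs
  imports Main
begin

text \<open>Vectors of Z^n are represented as integer lists of length n; coordinate i
  (1-based, 1 \<le> i \<le> n) of v is v ! (i - 1).\<close>

definition blockvec :: "nat \<Rightarrow> nat \<Rightarrow> nat \<Rightarrow> int \<Rightarrow> int \<Rightarrow> int \<Rightarrow> int list" where
  "blockvec a b c x y z = replicate a x @ replicate b y @ replicate c z"

definition sroot :: "nat \<Rightarrow> nat \<Rightarrow> int list" where
  "sroot n k = map (\<lambda>j. if j = k - 1 then 1 else 0) [0..<n]"

definition cprev :: "nat \<Rightarrow> nat \<Rightarrow> nat" where
  "cprev n i = (if i = 1 then n else i - 1)"
definition cnext :: "nat \<Rightarrow> nat \<Rightarrow> nat" where
  "cnext n i = (if i = n then 1 else i + 1)"

definition sref :: "nat \<Rightarrow> nat \<Rightarrow> int list \<Rightarrow> int list" where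
  "sref n i v = v[i - 1 := v ! (cprev n i - 1) + v ! (cnext n i - 1) - v ! (i - 1)]"

text \<open>The product s_{i_1} s_{i_2} ... s_{i_j} (composition, rightmost acts first)
  for the word [i_1, ..., i_j].\<close>
definition rword :: "nat \<Rightarrow> nat list \<Rightarrow> int list \<Rightarrow> int list" where
  "rword n w = foldr (\<lambda>i f. sref n i \<circ> f) w id"

definition asc :: "nat \<Rightarrow> nat \<Rightarrow> nat \<Rightarrow> int list \<Rightarrow> int list" where
  "asc n j l = rword n [j..<Suc l]"

definition desc :: "nat \<Rightarrow> nat \<Rightarrow> nat \<Rightarrow> int list \<Rightarrow> int list" where
  "desc n l j = rword n (rev [j..<Suc l])"

definition real_root :: "nat \<Rightarrow> int list \<Rightarrow> bool" where
  "real_root n v \<longleftrightarrow> (\<exists>w k. set w \<subseteq> {1..n} \<and> k \<in> {1..n} \<and> v = rword n w (sroot n k))"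

definition positive_real_root :: "nat \<Rightarrow> int list \<Rightarrow> bool" where
  "positive_real_root n v \<longleftrightarrow> real_root n v \<and> (\<forall>x \<in> set v. x \<ge> 0)"

end

theory Submission
  imports Defs
begin

lemma rword_append: "rword n (u @ w) = rword n u \<circ> rword n w"
  by (induction u) (auto simp: rword_def)

lemma rword_Cons: "rword n (i # w) = sref n i \<circ> rword n w"
  by (simp add: rword_def)

lemma rword_Nil: "rword n [] = id"
  by (simp add: rword_def)

lemma sref_mid:
  assumes "length (xs @ p # q # r # zs) = n" "length xs + 2 = i"
  shows "sref n i (xs @ p # q # r # zs) = xs @ p # (p + r - q) # r # zs"
proof -
  have "i \<noteq> 1" "i \<noteq> n" "cprev n i = i - 1" "cnext n i = i + 1" using assms by (auto simp: cprev_def cnext_def)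
  moreover have i: "i = Suc (Suc (length xs))" using assms by simp
  ultimately show ?thesis unfolding sref_def
    by (simp add: nth_append list_update_append)
qed

lemma sref_first:
  assumes "length (q # r # ys @ [p]) = n"
  shows "sref n 1 (q # r # ys @ [p]) = (p + r - q) # r # ys @ [p]"
proof -
  have "cprev n 1 = n" "cnext n 1 = 2" using assms by (auto simp: cprev_def cnext_def)
  moreover have "n = length ys + 3" using assms by simp
  ultimately show ?thesis unfolding sref_def
    by (simp add: nth_append)
qed

lemma sref_last:
  assumes "length (r # ys @ [p, q]) = n"
  shows "sref n n (r # ys @ [p, q]) = r # ys @ [p, p + r - q]"
proof -
  have "cprev n n = n - 1" "cnext n n = 1" using assms by (auto simp: cprev_def cnext_def)
  moreover have n: "n = Suc (Suc (Suc (length ys)))" using assms by simp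
  ultimately show ?thesis unfolding sref_def
    by (simp add: nth_append list_update_append)
qed

lemma fsweep:
  assumes "length (xs @ y # replicate r x @ x # zs) = n" "length xs + 2 = j" "l + 1 = j + r"
  shows "desc n l j (xs @ y # replicate r x @ x # zs) = xs @ y # replicate r y @ x # zs"
  using assms
proof (induction r arbitrary: xs j)
  case 0
  then show ?case by (simp add: desc_def rword_Nil)
next
  case (Suc r)
  have w: "rev [j..<Suc l] = rev [Suc j..<Suc l] @ [j]"
    using Suc.prems by (simp add: upt_conv_Cons del: upt_Suc)
  have "desc n l j (xs @ y # replicate (Suc r) x @ x # zs) = desc n l (Suc j) (sref n j (xs @ y # x # (replicate r x @ x # zs)))"
    by (simp only: desc_def w rword_append rword_Cons rword_Nil replicate_Suc comp_def id_def append.simps append_assoc)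
  also have "sref n j (xs @ y # x # (replicate r x @ x # zs)) = xs @ y # y # (replicate r x @ x # zs)"
  proof (cases r)
    case 0 then show ?thesis using Suc.prems sref_mid[of xs y x x zs n j] by simp
  next
    case (Suc r') then show ?thesis using Suc.prems sref_mid[of xs y x x "replicate r' x @ x # zs" n j] by simp
  qed
  also have "desc n l (Suc j) (xs @ y # y # replicate r x @ x # zs) = xs @ y # y # replicate r y @ x # zs"
    using Suc.IH[of "xs @ [y]" "Suc j"] Suc.prems by simp
  finally show ?case by (simp add: replicate_append_same[symmetric])
qed

lemma bsweep:
  assumes "length (xs @ x # replicate r x @ y # zs) = n" "length xs + 2 = j" "l + 1 = j + r"
  shows "asc n j l (xs @ x # replicate r x @ y # zs) = xs @ x # replicate r y @ y # zs"
  using assms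
proof (induction r arbitrary: xs j)
  case 0
  then show ?case by (simp add: asc_def rword_Nil)
next
  case (Suc r)
  have w: "[j..<Suc l] = j # [Suc j..<Suc l]"
    using Suc.prems by (simp add: upt_conv_Cons del: upt_Suc)
  have "asc n (Suc j) l ((xs @ [x]) @ x # replicate r x @ y # zs) = (xs @ [x]) @ x # replicate r y @ y # zs"
    using Suc.prems by (intro Suc.IH) auto
  hence e: "asc n j l (xs @ x # replicate (Suc r) x @ y # zs) = sref n j (xs @ x # x # (replicate r y @ y # zs))"
    by (simp only: asc_def w rword_Cons comp_def replicate_Suc append.simps append_assoc)
  also have "sref n j (xs @ x # x # (replicate r y @ y # zs)) = xs @ x # y # (replicate r y @ y # zs)"
  proof (cases r)
    case 0 then show ?thesis using Suc.prems sref_mid[of xs x x y zs n j] by simp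
  next
    case (Suc r') then show ?thesis using Suc.prems sref_mid[of xs x x y "replicate r' y @ y # zs" n j] by simp
  qed
  finally show ?case by simp
qed

lemma upt_split: "i \<le> j \<Longrightarrow> j \<le> k \<Longrightarrow> [i..<k] = [i..<j] @ [j..<k]"
  using upt_add_eq_append[of i j "k - j"] by simp

lemma sref_last':
  assumes "length (us @ [p, q]) = n" "us \<noteq> []"
  shows "sref n n (us @ [p, q]) = us @ [p, p + hd us - q]"
  using assms sref_last[of "hd us" "tl us" p q n] by (cases us) auto

lemma sref_first':
  assumes "length (q # r # us) = n" "us \<noteq> []"
  shows "sref n 1 (q # r # us) = (last us + r - q) # r # us"
  using assms sref_first[of q r "butlast us" "last us" n] by (cases us rule: rev_exhaust) auto

lemma step:
  fixes M :: int
  assumes n: "n = p + d + 3"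
  shows "(desc n (p+2) 2 \<circ> asc n 1 n \<circ> desc n (n - 1) (p + 3))
           (replicate (Suc p) M @ (M+1) # replicate (Suc d) M)
       = replicate (Suc p) (M+1) @ (M+2) # replicate (Suc d) (M+1)"
proof -
  have e1: "desc n (n - 1) (p+3) (replicate (Suc p) M @ (M+1) # replicate d M @ M # [])
      = replicate (Suc p) M @ (M+1) # replicate d (M+1) @ M # []"
    by (rule fsweep) (auto simp: n)
  have wa: "[1..<Suc n] = [1] @ [2..<p+2] @ [p+2] @ [p+3..<p+d+3] @ [n]"
  proof -
    have "[1..<Suc n] = [1..<2] @ [2..<p+2] @ [p+2..<p+3] @ [p+3..<p+d+3] @ [n..<Suc n]"
      by (simp add: n upt_split[symmetric] del: upt_Suc)
    moreover have "[1..<2] = [1::nat]" "[p+2..<p+3] = [p+2]" "[n..<Suc n] = [n]"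
      by (simp_all add: upt_rec)
    ultimately show ?thesis by (simp only:)
  qed
  have asc_dec: "asc n 1 n = sref n 1 \<circ> asc n 2 (p+1) \<circ> sref n (p+2) \<circ> asc n (p+3) (p+d+2) \<circ> sref n n"
  proof -
    have s1: "Suc (p+1) = p+2" "Suc (p+d+2) = p+d+3" by simp_all
    have a1: "asc n 2 (p+1) = rword n [2..<p+2]" "asc n (p+3) (p+d+2) = rword n [p+3..<p+d+3]"
      unfolding asc_def s1 by (rule refl)+
    show ?thesis unfolding a1 unfolding asc_def wa rword_append rword_Cons rword_Nil
      by (simp only: comp_assoc id_comp comp_id)
  qed
  have U1: "replicate (Suc p) M @ (M+1) # replicate d (M+1) @ [M] = (replicate (Suc p) M @ replicate d (M+1)) @ [M+1, M]"
    by (simp add: replicate_append_same[symmetric])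
  have e2: "sref n n ((replicate (Suc p) M @ replicate d (M+1)) @ [M+1, M]) = (replicate (Suc p) M @ replicate d (M+1)) @ [M+1, M+1]"
    using sref_last'[of "replicate (Suc p) M @ replicate d (M+1)" "M+1" M n] by (simp add: n)
  have U2: "(replicate (Suc p) M @ replicate d (M+1)) @ [M+1, M+1] = replicate (Suc p) M @ (M+1) # replicate d (M+1) @ (M+1) # []"
    by (simp add: replicate_append_same[symmetric])
  have e3: "asc n (p+3) (p+d+2) (replicate (Suc p) M @ (M+1) # replicate d (M+1) @ (M+1) # []) = replicate (Suc p) M @ (M+1) # replicate d (M+1) @ (M+1) # []"
    using bsweep[of "replicate (Suc p) M" "M+1" d "M+1" "[]" n "p+3" "p+d+2"] by (simp add: n)
  have U3: "replicate (Suc p) M @ (M+1) # replicate d (M+1) @ (M+1) # [] = replicate p M @ M # (M+1) # (M+1) # replicate d (M+1)"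
    by (simp add: replicate_append_same replicate_app_Cons_same[symmetric])
  have e4: "sref n (p+2) (replicate p M @ M # (M+1) # (M+1) # replicate d (M+1)) = replicate p M @ M # M # (M+1) # replicate d (M+1)"
    using sref_mid[of "replicate p M" M "M+1" "M+1" "replicate d (M+1)" n "p+2"] by (simp add: n)
  have U4: "replicate p M @ M # M # (M+1) # replicate d (M+1) = [] @ M # replicate p M @ M # replicate (Suc d) (M+1)"
    by (simp add: replicate_app_Cons_same)
  have e5: "asc n 2 (p+1) ([] @ M # replicate p M @ M # replicate (Suc d) (M+1)) = [] @ M # replicate p M @ M # replicate (Suc d) (M+1)"
    using bsweep[of "[]" M p M "replicate (Suc d) (M+1)" n 2 "p+1"] by (simp add: n)
  have e6: "sref n 1 (M # M # (replicate p M @ replicate (Suc d) (M+1))) = (M+1) # M # (replicate p M @ replicate (Suc d) (M+1))"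
    using sref_first'[of M M "replicate p M @ replicate (Suc d) (M+1)" n] by (simp add: n)
  have wd: "rev [2..<Suc (p+2)] = [p+2] @ rev [2..<p+2]"
    by simp
  have desc_dec: "desc n (p+2) 2 = sref n (p+2) \<circ> desc n (p+1) 2"
    unfolding desc_def wd rword_append rword_Cons rword_Nil by simp
  have e7: "desc n (p+1) 2 ([] @ (M+1) # replicate p M @ M # replicate (Suc d) (M+1)) = [] @ (M+1) # replicate p (M+1) @ M # replicate (Suc d) (M+1)"
    using fsweep[of "[]" "M+1" p M "replicate (Suc d) (M+1)" n 2 "p+1"] by (simp add: n)
  have e8: "sref n (p+2) (replicate p (M+1) @ (M+1) # M # (M+1) # replicate d (M+1)) = replicate p (M+1) @ (M+1) # (M+2) # (M+1) # replicate d (M+1)"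
    using sref_mid[of "replicate p (M+1)" "M+1" M "M+1" "replicate d (M+1)" n "p+2"] by (simp add: n)
  have V: "replicate (Suc p) M @ (M+1) # replicate (Suc d) M = replicate (Suc p) M @ (M+1) # replicate d M @ M # []"
    by (simp add: replicate_append_same[symmetric])
  have F1: "[] @ M # replicate p M @ M # replicate (Suc d) (M+1) = M # M # (replicate p M @ replicate (Suc d) (M+1))"
    by (simp add: replicate_app_Cons_same)
  have G1: "(M+1) # M # (replicate p M @ replicate (Suc d) (M+1)) = [] @ (M+1) # replicate p M @ M # replicate (Suc d) (M+1)"
    by (simp add: replicate_app_Cons_same)
  have H1: "[] @ (M+1) # replicate p (M+1) @ M # replicate (Suc d) (M+1) = replicate p (M+1) @ (M+1) # M # (M+1) # replicate d (M+1)"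
    by (simp add: replicate_app_Cons_same)
  have T1: "replicate p (M+1) @ (M+1) # (M+2) # (M+1) # replicate d (M+1) = replicate (Suc p) (M+1) @ (M+2) # replicate (Suc d) (M+1)"
    by (simp add: replicate_app_Cons_same)
  have "(desc n (p+2) 2 \<circ> asc n 1 n \<circ> desc n (n - 1) (p + 3))
           (replicate (Suc p) M @ (M+1) # replicate (Suc d) M)
     = desc n (p+2) 2 (asc n 1 n (desc n (n - 1) (p + 3) (replicate (Suc p) M @ (M+1) # replicate d M @ M # [])))"
    by (simp only: comp_apply V)
  also have "\<dots> = desc n (p+2) 2 (asc n 1 n ((replicate (Suc p) M @ replicate d (M+1)) @ [M+1, M]))"
    by (simp only: e1 U1)
  also have "\<dots> = desc n (p+2) 2 (sref n 1 (asc n 2 (p+1) (sref n (p+2) (asc n (p+3) (p+d+2) (sref n n ((replicate (Suc p) M @ replicate d (M+1)) @ [M+1, M]))))))"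
    by (simp only: asc_dec comp_apply)
  also have "\<dots> = desc n (p+2) 2 (sref n 1 (asc n 2 (p+1) (sref n (p+2) (replicate p M @ M # (M+1) # (M+1) # replicate d (M+1)))))"
    by (subst e2, subst U2, subst e3, subst U3, rule refl)
  also have "\<dots> = desc n (p+2) 2 (sref n 1 (M # M # (replicate p M @ replicate (Suc d) (M+1))))"
    by (subst e4, subst U4, subst e5, subst F1, rule refl)
  also have "\<dots> = sref n (p+2) (desc n (p+1) 2 ([] @ (M+1) # replicate p M @ M # replicate (Suc d) (M+1)))"
    by (subst e6, subst G1, subst desc_dec, subst comp_apply, rule refl)
  also have "\<dots> = replicate (Suc p) (M+1) @ (M+2) # replicate (Suc d) (M+1)"
    by (subst e7, subst H1, subst e8, subst T1, rule refl)
  finally show ?thesis .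
qed
lemma rword_pow: "rword n (concat (replicate m ww)) = rword n ww ^^ m"
  by (induction m) (auto simp: rword_append rword_Nil)

theorem theorem3p1:
  fixes n m a b c :: nat
  assumes "n \<ge> 3" and "a \<ge> 1" and "b \<ge> 1" and "c \<ge> 1" and "a + b + c = n"
  defines "W \<equiv> desc n (a + b) 2 \<circ> asc n 1 n \<circ> desc n (n - 1) (a + b + 1)"
  shows "blockvec a b c (int m) (int m + 1) (int m) = asc n (a + 1) (a + b - 1) ((W ^^ m) (sroot n (a + b)))
         \<and> positive_real_root n (blockvec a b c (int m) (int m + 1) (int m))"
proof -
  obtain a' b' c' where abc: "a = Suc a'" "b = Suc b'" "c = Suc c'"
    using assms(2-4) by (cases a; cases b; cases c) auto
  define p where "p = a' + b'"
  define d where "d = c'"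
  have n: "n = p + d + 3" using assms(5) abc by (simp add: p_def d_def)
  define V where "V = (\<lambda>M::int. replicate (Suc p) M @ (M+1) # replicate (Suc d) M)"
  have Wst: "W (V M) = V (M + 1)" for M
  proof -
    have e: "a + b = p + 2" "a + b + 1 = p + 3" using abc by (simp_all add: p_def)
    have "W = desc n (p+2) 2 \<circ> asc n 1 n \<circ> desc n (n - 1) (p + 3)"
      unfolding W_def by (subst e(2), subst e(1), rule refl)
    then show ?thesis using step[OF n, of M] by (simp add: V_def add.assoc)
  qed
  have iter: "(W ^^ k) (V 0) = V (int k)" for k
    by (induction k) (simp_all add: Wst add.commute)
  have sr: "sroot n (a + b) = V 0"
  proof (rule nth_equalityI)
    show "length (sroot n (a + b)) = length (V 0)" by (simp add: sroot_def V_def n)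
    fix j assume "j < length (sroot n (a + b))"
    then have j: "j < n" by (simp add: sroot_def)
    have ab: "a + b - 1 = Suc p" using abc by (simp add: p_def)
    show "sroot n (a + b) ! j = V 0 ! j"
      using j unfolding sroot_def V_def ab
      by (cases "j < Suc p"; cases "j = Suc p") (auto simp: nth_append nth_Cons' n)
  qed
  have fin: "asc n (a + 1) (a + b - 1) (V M) = blockvec a b c M (M+1) M" for M
  proof -
    have "V M = replicate a' M @ M # replicate b' M @ (M+1) # replicate c M"
      unfolding V_def p_def d_def abc by (simp add: replicate_add replicate_app_Cons_same)
    moreover have "asc n (a + 1) (a + b - 1) (replicate a' M @ M # replicate b' M @ (M+1) # replicate c M)
       = replicate a' M @ M # replicate b' (M+1) @ (M+1) # replicate c M"
      by (rule bsweep) (auto simp: abc n p_def d_def)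
    moreover have "replicate a' M @ M # replicate b' (M+1) @ (M+1) # replicate c M = blockvec a b c M (M+1) M"
      unfolding blockvec_def abc by (simp add: replicate_app_Cons_same)
    ultimately show ?thesis by simp
  qed
  have eq: "blockvec a b c (int m) (int m + 1) (int m) = asc n (a + 1) (a + b - 1) ((W ^^ m) (sroot n (a + b)))"
    unfolding sr iter fin ..
  define ww where "ww = rev [2..<Suc (a+b)] @ [1..<Suc n] @ rev [a+b+1..<Suc (n-1)]"
  have Ww: "W = rword n ww"
    unfolding W_def ww_def desc_def asc_def rword_append comp_assoc by (rule refl)
  have rr: "real_root n (blockvec a b c (int m) (int m + 1) (int m))"
    unfolding real_root_def
  proof (intro exI conjI)
    show "blockvec a b c (int m) (int m + 1) (int m) = rword n ([a+1..<Suc (a+b-1)] @ concat (replicate m ww)) (sroot n (a+b))"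
      unfolding eq rword_append rword_pow Ww[symmetric] asc_def by simp
    show "set ([a+1..<Suc (a+b-1)] @ concat (replicate m ww)) \<subseteq> {1..n}"
      using assms(5) abc unfolding ww_def set_append set_concat set_rev set_upt by auto
    show "a + b \<in> {1..n}" using assms by simp
  qed
  have nn: "\<forall>x \<in> set (blockvec a b c (int m) (int m + 1) (int m)). x \<ge> 0"
    by (auto simp: blockvec_def)
  show ?thesis using eq rr nn unfolding positive_real_root_def by blast
qed
end
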